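(* Let $(M,J,\Theta)$ be a 3-dimensional pseudohermitian manifold with vanishing torsion and constant Webster scalar curvature $W$, and let $\Sigma\subset M$ be a surface. On any open set of nonsingular points of $\Sigma$ where $H_{cr}\neq0$, the function $\mathfrak f$ defined below satisfies $$|H_{cr}|\mathfrak f=e_1(H)H_{cr}+\tfrac32V(H_{cr})+\tfrac12He_1(H_{cr})-\alpha HH_{cr},$$ and the first-variation density $\mathcal E_1$ can be rewritten as $$\mathcal E_1=|H_{cr}|^{-1/2}\Big\{-\tfrac14\operatorname{sign}(H_{cr})\,\mathfrak f\,e_1(H_{cr})+\tfrac12e_1(|H_{cr}|\mathfrak f)+\tfrac32|H_{cr}|\mathfrak f\alpha+H_{cr}\big[\tfrac92V(\alpha)+3HH_{cr}-\tfrac16H^3\big]\Big\}.$$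
   Context: $\xi=\ker\Theta$, $T$ the Reeb field. At nonsingular points of $\Sigma$ ($T\Sigma\neq\xi$), $e_1$ is a unit vector (w.r.t. $\frac12d\Theta(\cdot,J\cdot)$) spanning $T\Sigma\cap\xi$, $e_2=Je_1$, $\alpha$ is the deviation function defined by $V:=T+\alpha e_2\in T\Sigma$, and $H$ is the $p$-mean curvature. Define $H_{cr}:=e_1(\alpha)+\frac12\alpha^2+\frac16H^2+\frac14W$ and $$\mathfrak f:=|H_{cr}|^{-1}\Big\{e_1(H)\big(e_1(\alpha)+\tfrac12\alpha^2+\tfrac13H^2+\tfrac14W\big)+HV(H)+\tfrac32V\big(e_1(\alpha)+\tfrac12\alpha^2\big)-\tfrac72\alpha He_1(\alpha)-\tfrac52\alpha^3H-\tfrac23\alpha H^3-\tfrac54\alpha HW\Big\},$$ $$\mathcal E_1:=\tfrac12e_1(|H_{cr}|^{1/2}\mathfrak f)+\tfrac32|H_{cr}|^{1/2}\alpha\mathfrak f+\tfrac12\operatorname{sign}(H_{cr})|H_{cr}|^{1/2}\{9V(\alpha)+6HH_{cr}-\tfrac13H^3\}.$$ In such a manifold the Codazzi-like equation $e_1e_1(\alpha)=-6\alpha e_1(\alpha)+V(H)-\alpha H^2-4\alpha^3-2W\alpha$ holds. *)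

theory Defs
  imports "HOL-Analysis.Analysis"
begin

text \<open>Local model: a chart U (open subset of R^2) of the set of nonsingular points of
the surface Sigma. Functions on Sigma are functions real*real => real, tangent vector
fields are maps real*real => real*real, and X(g) is the derivative of g along X.\<close>

definition vder :: "(real \<times> real \<Rightarrow> real \<times> real) \<Rightarrow> (real \<times> real \<Rightarrow> real) \<Rightarrow> real \<times> real \<Rightarrow> real" where
  "vder X g p = frechet_derivative g (at p) (X p)"

fun Ck :: "nat \<Rightarrow> (real \<times> real) set \<Rightarrow> (real \<times> real \<Rightarrow> real) \<Rightarrow> bool" where
  "Ck 0 U g = continuous_on U g"
| "Ck (Suc k) U g = (continuous_on U g \<and> (\<forall>x\<in>U. g differentiable (at x)) \<and>
      (\<forall>v. Ck k U (\<lambda>x. frechet_derivative g (at x) v)))"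

definition smooth_fun :: "(real \<times> real) set \<Rightarrow> (real \<times> real \<Rightarrow> real) \<Rightarrow> bool" where
  "smooth_fun U g \<longleftrightarrow> (\<forall>k. Ck k U g)"

definition smooth_vf :: "(real \<times> real) set \<Rightarrow> (real \<times> real \<Rightarrow> real \<times> real) \<Rightarrow> bool" where
  "smooth_vf U X \<longleftrightarrow> smooth_fun U (\<lambda>p. fst (X p)) \<and> smooth_fun U (\<lambda>p. snd (X p))"

definition Hcr :: "(real \<times> real \<Rightarrow> real \<times> real) \<Rightarrow> (real \<times> real \<Rightarrow> real) \<Rightarrow> (real \<times> real \<Rightarrow> real)
   \<Rightarrow> real \<Rightarrow> real \<times> real \<Rightarrow> real" where
  "Hcr e1 \<alpha> H W p = vder e1 \<alpha> p + \<alpha> p ^ 2 / 2 + H p ^ 2 / 6 + W / 4"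

definition frakf :: "(real \<times> real \<Rightarrow> real \<times> real) \<Rightarrow> (real \<times> real \<Rightarrow> real \<times> real) \<Rightarrow> (real \<times> real \<Rightarrow> real)
   \<Rightarrow> (real \<times> real \<Rightarrow> real) \<Rightarrow> real \<Rightarrow> real \<times> real \<Rightarrow> real" where
  "frakf e1 V \<alpha> H W p = (1 / \<bar>Hcr e1 \<alpha> H W p\<bar>) *
     ( vder e1 H p * (vder e1 \<alpha> p + \<alpha> p ^ 2 / 2 + H p ^ 2 / 3 + W / 4)
     + H p * vder V H p
     + 3 / 2 * vder V (\<lambda>q. vder e1 \<alpha> q + \<alpha> q ^ 2 / 2) p
     - 7 / 2 * \<alpha> p * H p * vder e1 \<alpha> p
     - 5 / 2 * \<alpha> p ^ 3 * H p
     - 2 / 3 * \<alpha> p * H p ^ 3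
     - 5 / 4 * \<alpha> p * H p * W)"

definition E1 :: "(real \<times> real \<Rightarrow> real \<times> real) \<Rightarrow> (real \<times> real \<Rightarrow> real \<times> real) \<Rightarrow> (real \<times> real \<Rightarrow> real)
   \<Rightarrow> (real \<times> real \<Rightarrow> real) \<Rightarrow> real \<Rightarrow> real \<times> real \<Rightarrow> real" where
  "E1 e1 V \<alpha> H W p =
      1 / 2 * vder e1 (\<lambda>q. sqrt \<bar>Hcr e1 \<alpha> H W q\<bar> * frakf e1 V \<alpha> H W q) p
    + 3 / 2 * sqrt \<bar>Hcr e1 \<alpha> H W p\<bar> * \<alpha> p * frakf e1 V \<alpha> H W p
    + 1 / 2 * sgn (Hcr e1 \<alpha> H W p) * sqrt \<bar>Hcr e1 \<alpha> H W p\<bar> *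
        (9 * vder V \<alpha> p + 6 * H p * Hcr e1 \<alpha> H W p - H p ^ 3 / 3)"

end

theory Submission imports Defs begin


lemma fd_cong:
  assumes "open U" "x \<in> U" "\<forall>y\<in>U. f y = g y"
  shows "frechet_derivative f (at x) = frechet_derivative g (at x)"
proof -
  have "\<And>f'. (f has_derivative f') (at x) \<longleftrightarrow> (g has_derivative f') (at x)"
    using has_derivative_transform_within_open[of _ _ x UNIV U] assms by auto
  then show ?thesis unfolding frechet_derivative_def by simp
qed

lemma diff_cong:
  assumes "open U" "x \<in> U" "\<forall>y\<in>U. f y = g y"
  shows "f differentiable (at x) \<longleftrightarrow> g differentiable (at x)"
proof -
  have "\<And>f'. (f has_derivative f') (at x) \<longleftrightarrow> (g has_derivative f') (at x)"
    using has_derivative_transform_within_open[of _ _ x UNIV U] assms by auto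
  then show ?thesis unfolding differentiable_def by simp
qed

lemma Ck_Suc_diff: "Ck (Suc k) U f \<Longrightarrow> x \<in> U \<Longrightarrow> f differentiable (at x)"
  unfolding Ck.simps by blast
lemma Ck_Suc_D: "Ck (Suc k) U f \<Longrightarrow> Ck k U (\<lambda>x. frechet_derivative f (at x) v)"
  unfolding Ck.simps(2)[of k] by blast
lemma Ck_cont: "Ck k U f \<Longrightarrow> continuous_on U f"
  by (cases k) (auto simp only: Ck.simps)
lemma Ck_SucI: "continuous_on U f \<Longrightarrow> (\<And>x. x \<in> U \<Longrightarrow> f differentiable (at x)) \<Longrightarrow>
   (\<And>v. Ck k U (\<lambda>x. frechet_derivative f (at x) v)) \<Longrightarrow> Ck (Suc k) U f"
  unfolding Ck.simps(2)[of k] by blast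

lemma Ck_cong:
  assumes "open U" "\<forall>x\<in>U. f x = g x"
  shows "Ck k U f = Ck k U g"
  using assms(2)
proof (induction k arbitrary: f g)
  case 0
  have "continuous_on U f = continuous_on U g" by (rule continuous_on_cong) (use 0 in blast)+
  then show ?case by (simp only: Ck.simps)
next
  case (Suc k)
  have c: "continuous_on U f = continuous_on U g" by (rule continuous_on_cong) (use Suc.prems in blast)+
  have d: "(\<forall>x\<in>U. f differentiable (at x)) = (\<forall>x\<in>U. g differentiable (at x))"
    using diff_cong[OF assms(1) _ Suc.prems] by blast
  have "Ck k U (\<lambda>x. frechet_derivative f (at x) v) = Ck k U (\<lambda>x. frechet_derivative g (at x) v)" for v
  proof -
    have "\<forall>x\<in>U. frechet_derivative f (at x) v = frechet_derivative g (at x) v"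
      using fd_cong[OF assms(1) _ Suc.prems] by simp
    then show ?thesis by (rule Suc.IH)
  qed
  then have v: "(\<forall>v. Ck k U (\<lambda>x. frechet_derivative f (at x) v)) = (\<forall>v. Ck k U (\<lambda>x. frechet_derivative g (at x) v))" by blast
  show ?case unfolding Ck.simps(2)[of k] c d v ..
qed

lemma Ck_mono: "Ck (Suc k) U f \<Longrightarrow> Ck k U f"
proof (induction k arbitrary: f)
  case 0 then show ?case using Ck_cont unfolding Ck.simps(1) by blast
next
  case (Suc k)
  show ?case
  proof (rule Ck_SucI)
    show "continuous_on U f" using Ck_cont[OF Suc.prems] .
    show "f differentiable (at x)" if "x \<in> U" for x using Ck_Suc_diff[OF Suc.prems that] .
    fix v show "Ck k U (\<lambda>x. frechet_derivative f (at x) v)"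
      using Ck_Suc_D[OF Suc.prems] by (rule Suc.IH)
  qed
qed

lemma Ck_const: "Ck k U (\<lambda>x. c)"
proof (induction k arbitrary: c)
  case 0 then show ?case by (simp only: Ck.simps(1) continuous_on_const)
next
  case (Suc k)
  have "frechet_derivative (\<lambda>x. c) (at x) = (\<lambda>h. 0)" for x :: "real \<times> real"
    using frechet_derivative_at[OF has_derivative_const] by metis
  then have "(\<lambda>x. frechet_derivative (\<lambda>x. c) (at x) v) = (\<lambda>x. 0)" for v by simp
  then show ?case using Suc.IH by (intro Ck_SucI) (auto intro: continuous_on_const)
qed

lemma Ck_add:
  assumes "open U"
  shows "Ck k U f \<Longrightarrow> Ck k U g \<Longrightarrow> Ck k U (\<lambda>x. f x + g x)"
proof (induction k arbitrary: f g)
  case 0 then show ?case unfolding Ck.simps(1) by (rule continuous_on_add)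
next
  case (Suc k)
  have e: "\<forall>x\<in>U. frechet_derivative (\<lambda>x. f x + g x) (at x) v = frechet_derivative f (at x) v + frechet_derivative g (at x) v" for v
  proof
    fix x assume x: "x \<in> U"
    have "f differentiable (at x)" "g differentiable (at x)"
      using Ck_Suc_diff[OF Suc.prems(1) x] Ck_Suc_diff[OF Suc.prems(2) x] .
    then have dd: "(f has_derivative frechet_derivative f (at x)) (at x)" "(g has_derivative frechet_derivative g (at x)) (at x)"
      using frechet_derivative_works by blast+
    have "frechet_derivative (\<lambda>x. f x + g x) (at x) = (\<lambda>h. frechet_derivative f (at x) h + frechet_derivative g (at x) h)"
      using frechet_derivative_at[OF has_derivative_add[OF dd]] by (rule sym)
    then show "frechet_derivative (\<lambda>x. f x + g x) (at x) v = frechet_derivative f (at x) v + frechet_derivative g (at x) v"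
      by simp
  qed
  show ?case
  proof (rule Ck_SucI)
    show "continuous_on U (\<lambda>x. f x + g x)"
      using Ck_cont[OF Suc.prems(1)] Ck_cont[OF Suc.prems(2)] by (rule continuous_on_add)
    show "(\<lambda>x. f x + g x) differentiable (at x)" if "x \<in> U" for x
      using Ck_Suc_diff[OF Suc.prems(1) that] Ck_Suc_diff[OF Suc.prems(2) that] by (rule differentiable_add)
    fix v
    have "Ck k U (\<lambda>x. frechet_derivative f (at x) v + frechet_derivative g (at x) v)"
      using Ck_Suc_D[OF Suc.prems(1)] Ck_Suc_D[OF Suc.prems(2)] by (rule Suc.IH)
    then show "Ck k U (\<lambda>x. frechet_derivative (\<lambda>x. f x + g x) (at x) v)"
      using Ck_cong[OF assms e] by blast
  qed
qed

lemma Ck_mult: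
  assumes "open U"
  shows "Ck k U f \<Longrightarrow> Ck k U g \<Longrightarrow> Ck k U (\<lambda>x. f x * g x)"
proof (induction k arbitrary: f g)
  case 0 then show ?case unfolding Ck.simps(1) by (rule continuous_on_mult)
next
  case (Suc k)
  have e: "\<forall>x\<in>U. frechet_derivative (\<lambda>x. f x * g x) (at x) v = f x * frechet_derivative g (at x) v + frechet_derivative f (at x) v * g x" for v
  proof
    fix x assume x: "x \<in> U"
    have "f differentiable (at x)" "g differentiable (at x)"
      using Ck_Suc_diff[OF Suc.prems(1) x] Ck_Suc_diff[OF Suc.prems(2) x] .
    then have dd: "(f has_derivative frechet_derivative f (at x)) (at x)" "(g has_derivative frechet_derivative g (at x)) (at x)"
      using frechet_derivative_works by blast+
    have "frechet_derivative (\<lambda>x. f x * g x) (at x) = (\<lambda>h. f x * frechet_derivative g (at x) h + frechet_derivative f (at x) h * g x)"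
      using frechet_derivative_at[OF has_derivative_mult[OF dd]] by (rule sym)
    then show "frechet_derivative (\<lambda>x. f x * g x) (at x) v = f x * frechet_derivative g (at x) v + frechet_derivative f (at x) v * g x"
      by simp
  qed
  show ?case
  proof (rule Ck_SucI)
    show "continuous_on U (\<lambda>x. f x * g x)"
      using Ck_cont[OF Suc.prems(1)] Ck_cont[OF Suc.prems(2)] by (rule continuous_on_mult)
    show "(\<lambda>x. f x * g x) differentiable (at x)" if "x \<in> U" for x
      using Ck_Suc_diff[OF Suc.prems(1) that] Ck_Suc_diff[OF Suc.prems(2) that] by (rule differentiable_mult)
    fix v
    have "Ck k U (\<lambda>x. f x * frechet_derivative g (at x) v)"
      using Ck_mono[OF Suc.prems(1)] Ck_Suc_D[OF Suc.prems(2)] by (rule Suc.IH)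
    moreover have "Ck k U (\<lambda>x. frechet_derivative f (at x) v * g x)"
      using Ck_Suc_D[OF Suc.prems(1)] Ck_mono[OF Suc.prems(2)] by (rule Suc.IH)
    ultimately have "Ck k U (\<lambda>x. f x * frechet_derivative g (at x) v + frechet_derivative f (at x) v * g x)"
      by (rule Ck_add[OF assms])
    then show "Ck k U (\<lambda>x. frechet_derivative (\<lambda>x. f x * g x) (at x) v)"
      using Ck_cong[OF assms e] by blast
  qed
qed


lemma sm_const: "smooth_fun U (\<lambda>x. c)"
  unfolding smooth_fun_def by (intro allI Ck_const)
lemma sm_add: "open U \<Longrightarrow> smooth_fun U f \<Longrightarrow> smooth_fun U g \<Longrightarrow> smooth_fun U (\<lambda>x. f x + g x)"
  unfolding smooth_fun_def by (intro allI Ck_add; blast)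
lemma sm_mult: "open U \<Longrightarrow> smooth_fun U f \<Longrightarrow> smooth_fun U g \<Longrightarrow> smooth_fun U (\<lambda>x. f x * g x)"
  unfolding smooth_fun_def by (intro allI Ck_mult; blast)
lemma sm_cong: "open U \<Longrightarrow> \<forall>x\<in>U. f x = g x \<Longrightarrow> smooth_fun U f \<Longrightarrow> smooth_fun U g"
  unfolding smooth_fun_def proof (intro allI)
  fix k assume "open U" "\<forall>x\<in>U. f x = g x" "\<forall>k. Ck k U f"
  then show "Ck k U g" using Ck_cong[of U f g k] by blast
qed
lemma sm_D: "smooth_fun U g \<Longrightarrow> smooth_fun U (\<lambda>x. frechet_derivative g (at x) v)"
  unfolding smooth_fun_def proof (intro allI)
  fix k assume "\<forall>k. Ck k U g"
  then show "Ck k U (\<lambda>x. frechet_derivative g (at x) v)" using Ck_Suc_D[of k U g v] by blast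
qed
lemma sm_diff: "smooth_fun U g \<Longrightarrow> x \<in> U \<Longrightarrow> g differentiable (at x)"
  unfolding smooth_fun_def using Ck_Suc_diff[of 0 U g x] by blast
lemma sm_hasder: "smooth_fun U g \<Longrightarrow> x \<in> U \<Longrightarrow> (g has_derivative frechet_derivative g (at x)) (at x)"
  using sm_diff[of U g x] frechet_derivative_works[of g "at x"] by blast
lemma sm_minus: "open U \<Longrightarrow> smooth_fun U f \<Longrightarrow> smooth_fun U g \<Longrightarrow> smooth_fun U (\<lambda>x. f x - g x)"
proof -
  assume a: "open U" "smooth_fun U f" "smooth_fun U g"
  have "smooth_fun U (\<lambda>x. f x + (\<lambda>x. -1) x * g x)"
    by (intro sm_add sm_mult a sm_const)
  then show ?thesis by simp
qed
lemma sm_divc: "open U \<Longrightarrow> smooth_fun U f \<Longrightarrow> smooth_fun U (\<lambda>x. f x / c)"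
proof -
  assume a: "open U" "smooth_fun U f"
  have "smooth_fun U (\<lambda>x. f x * (\<lambda>x. 1 / c) x)"
    by (intro sm_mult a sm_const)
  then show ?thesis by simp
qed
lemma sm_pow: "open U \<Longrightarrow> smooth_fun U f \<Longrightarrow> smooth_fun U (\<lambda>x. f x ^ n)"
proof (induction n)
  case 0 then show ?case using sm_const[of U 1] by simp
next
  case (Suc n)
  have "smooth_fun U (\<lambda>x. f x * (\<lambda>x. f x ^ n) x)"
    by (intro sm_mult Suc)
  then show ?case by simp
qed

lemma vder_lin:
  assumes "g differentiable (at x)"
  shows "vder X g x = fst (X x) * frechet_derivative g (at x) (1,0) + snd (X x) * frechet_derivative g (at x) (0,1)"
proof -
  have bl: "bounded_linear (frechet_derivative g (at x))"
    using assms frechet_derivative_works has_derivative_bounded_linear by blast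
  have "X x = fst (X x) *\<^sub>R (1,0) + snd (X x) *\<^sub>R (0,1)" by (cases "X x") simp
  then have "vder X g x = frechet_derivative g (at x) (fst (X x) *\<^sub>R (1,0) + snd (X x) *\<^sub>R (0,1))"
    unfolding vder_def by (rule arg_cong[where f="frechet_derivative g (at x)"])
  also have "\<dots> = fst (X x) * frechet_derivative g (at x) (1,0) + snd (X x) * frechet_derivative g (at x) (0,1)"
    using bounded_linear.linear[OF bl] by (simp only: linear_add linear_cmul real_scaleR_def)
  finally show ?thesis .
qed

lemma sm_vder:
  assumes U: "open U" and X: "smooth_vf U X" and g: "smooth_fun U g"
  shows "smooth_fun U (vder X g)"
proof -
  have "smooth_fun U (\<lambda>x. fst (X x) * frechet_derivative g (at x) (1,0) + snd (X x) * frechet_derivative g (at x) (0,1))"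
    using X unfolding smooth_vf_def by (intro sm_add sm_mult U sm_D g) auto
  moreover have "\<forall>x\<in>U. fst (X x) * frechet_derivative g (at x) (1,0) + snd (X x) * frechet_derivative g (at x) (0,1) = vder X g x"
    using vder_lin[OF sm_diff[OF g]] by simp
  ultimately show ?thesis by (rule sm_cong[OF U, rotated])
qed

lemma vder_has: "(g has_derivative g') (at x) \<Longrightarrow> vder X g x = g' (X x)"
  unfolding vder_def using frechet_derivative_at[of g g' x] by simp

lemma vder_cong: "open U \<Longrightarrow> x \<in> U \<Longrightarrow> \<forall>y\<in>U. f y = g y \<Longrightarrow> vder X f x = vder X g x"
  unfolding vder_def using fd_cong[of U x f g] by simp



lemma sqrt_helper: "(x::real) \<noteq> 0 \<Longrightarrow> sqrt \<bar>x\<bar> * (1 / \<bar>x\<bar> * n) = n / sqrt (sqrt (x ^ 2))"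
proof -
  assume x: "x \<noteq> 0"
  have e: "\<bar>x\<bar> = sqrt \<bar>x\<bar> * sqrt \<bar>x\<bar>" by simp
  have "sqrt \<bar>x\<bar> > 0" using x by simp
  then show ?thesis unfolding real_sqrt_abs by (subst (2) e) (simp add: field_simps)
qed

lemma alg2:
  fixes s h n dn dh a hh va :: real
  assumes s: "s > 0" and h: "h \<noteq> 0" and hs: "\<bar>h\<bar> = s^2"
  shows "1/2 * (dn/s - n * h * dh/(2 * s^3 * \<bar>h\<bar>)) + 3/2 * s * a * (1/\<bar>h\<bar> * n) + 1/2 * sgn h * s * (9 * va + 6 * hh * h - hh^3/3)
   = 1/s  *  (-1/4 * sgn h * (1/\<bar>h\<bar> * n) * dh + 1/2 * dn + 3/2 * \<bar>h\<bar> * (1/\<bar>h\<bar> * n) * a + h * (9/2 * va + 3 * hh * h - hh^3/6))"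
proof (cases "h > 0")
  case True
  have sg: "sgn h = 1" using True by simp
  have "h = s^2" using hs True by auto
  then show ?thesis unfolding sg using s by (simp add: field_simps power2_eq_square power3_eq_cube)
next
  case False
  have sg: "sgn h = -1" using False h by simp
  have "h = -(s^2)" using hs h False by auto
  then show ?thesis unfolding sg using s by (simp add: field_simps power2_eq_square power3_eq_cube)
qed

theorem proposition5p2:
  fixes U :: "(real \<times> real) set"
    and e1 V :: "real \<times> real \<Rightarrow> real \<times> real"
    and \<alpha> H :: "real \<times> real \<Rightarrow> real"
    and W :: real
  assumes "open U"
    and "smooth_vf U e1" and "smooth_vf U V"
    and "smooth_fun U \<alpha>" and "smooth_fun U H"
    and codazzi: "\<forall>p\<in>U. vder e1 (vder e1 \<alpha>) p =
        - 6 * \<alpha> p * vder e1 \<alpha> p + vder V H p - \<alpha> p * H p ^ 2 - 4 * \<alpha> p ^ 3 - 2 * W * \<alpha> p"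
    and "\<forall>p\<in>U. Hcr e1 \<alpha> H W p \<noteq> 0"
  shows "\<forall>p\<in>U.
     \<bar>Hcr e1 \<alpha> H W p\<bar> * frakf e1 V \<alpha> H W p =
        vder e1 H p * Hcr e1 \<alpha> H W p + 3 / 2 * vder V (Hcr e1 \<alpha> H W) p
        + 1 / 2 * H p * vder e1 (Hcr e1 \<alpha> H W) p - \<alpha> p * H p * Hcr e1 \<alpha> H W p
   \<and> E1 e1 V \<alpha> H W p =
        (1 / sqrt \<bar>Hcr e1 \<alpha> H W p\<bar>) *
        ( - 1 / 4 * sgn (Hcr e1 \<alpha> H W p) * frakf e1 V \<alpha> H W p * vder e1 (Hcr e1 \<alpha> H W) p
          + 1 / 2 * vder e1 (\<lambda>q. \<bar>Hcr e1 \<alpha> H W q\<bar> * frakf e1 V \<alpha> H W q) p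
          + 3 / 2 * \<bar>Hcr e1 \<alpha> H W p\<bar> * frakf e1 V \<alpha> H W p * \<alpha> p
          + Hcr e1 \<alpha> H W p * (9 / 2 * vder V \<alpha> p + 3 * H p * Hcr e1 \<alpha> H W p - H p ^ 3 / 6))"
proof
  fix p assume p: "p \<in> U"
  note U = assms(1)
  have se1: "smooth_vf U e1" and sV: "smooth_vf U V" and sa: "smooth_fun U \<alpha>" and sH: "smooth_fun U H"
    using assms by auto
  define A where "A = vder e1 \<alpha>"
  define B where "B = (\<lambda>q. vder e1 \<alpha> q + \<alpha> q ^ 2 / 2)"
  define N where "N = (\<lambda>q. vder e1 H q * (vder e1 \<alpha> q + \<alpha> q ^ 2 / 2 + H q ^ 2 / 3 + W / 4)
     + H q * vder V H q
     + 3 / 2 * vder V (\<lambda>q. vder e1 \<alpha> q + \<alpha> q ^ 2 / 2) q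
     - 7 / 2 * \<alpha> q * H q * vder e1 \<alpha> q
     - 5 / 2 * \<alpha> q ^ 3 * H q
     - 2 / 3 * \<alpha> q * H q ^ 3
     - 5 / 4 * \<alpha> q * H q * W)"
  define h where "h = Hcr e1 \<alpha> H W p"
  have hne: "h \<noteq> 0" using assms(7) p h_def by auto
  have sA: "smooth_fun U A" unfolding A_def by (rule sm_vder[OF U se1 sa])
  have sN: "smooth_fun U N" unfolding N_def
    by (intro sm_add sm_minus sm_mult sm_const sm_pow sm_divc sm_vder U se1 sV sa sH)
  have Hc: "Hcr e1 \<alpha> H W = (\<lambda>q. A q + \<alpha> q ^ 2 / 2 + H q ^ 2 / 6 + W / 4)"
    by (rule ext) (simp add: Hcr_def A_def)
  have fr: "frakf e1 V \<alpha> H W q = 1 / \<bar>Hcr e1 \<alpha> H W q\<bar> * N q" for q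
    by (simp add: frakf_def N_def)
  note dA = sm_hasder[OF sA p] and da = sm_hasder[OF sa p] and dH = sm_hasder[OF sH p] and dN = sm_hasder[OF sN p]
  let ?DA = "frechet_derivative A (at p)" and ?Da = "frechet_derivative \<alpha> (at p)"
    and ?DH = "frechet_derivative H (at p)" and ?DN = "frechet_derivative N (at p)"
  have dHc: "(Hcr e1 \<alpha> H W has_derivative (\<lambda>v. ?DA v + \<alpha> p * ?Da v + H p * ?DH v / 3)) (at p)"
    unfolding Hc
    by (rule has_derivative_eq_rhs, (rule derivative_intros dA da dH | simp)+, simp add: fun_eq_iff field_simps)
  have dB: "(B has_derivative (\<lambda>v. ?DA v + \<alpha> p * ?Da v)) (at p)"
    unfolding B_def A_def[symmetric]
    by (rule has_derivative_eq_rhs, (rule derivative_intros dA da dH | simp)+, simp add: fun_eq_iff field_simps)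
  have vHc: "vder X (Hcr e1 \<alpha> H W) p = vder X A p + \<alpha> p * vder X \<alpha> p + H p * vder X H p / 3" for X
    using vder_has[OF dHc] by (simp add: vder_def)
  have vB: "vder X B p = vder X A p + \<alpha> p * vder X \<alpha> p" for X
    using vder_has[OF dB] by (simp add: vder_def)
  have vB': "vder X (\<lambda>q. vder e1 \<alpha> q + \<alpha> q ^ 2 / 2) p = vder X A p + \<alpha> p * vder X \<alpha> p" for X
    using vB unfolding B_def .
  have Ap: "A p = vder e1 \<alpha> p" unfolding A_def ..
  have cod: "vder e1 A p = - 6 * \<alpha> p * vder e1 \<alpha> p + vder V H p - \<alpha> p * H p ^ 2 - 4 * \<alpha> p ^ 3 - 2 * W * \<alpha> p"
    using codazzi p unfolding A_def by blast
  have hval: "h = A p + \<alpha> p ^ 2 / 2 + H p ^ 2 / 6 + W / 4" unfolding h_def Hc ..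
  have part1: "\<bar>h\<bar> * frakf e1 V \<alpha> H W p = N p" using hne by (simp add: fr h_def[symmetric])
  also have "N p = vder e1 H p * h + 3 / 2 * vder V (Hcr e1 \<alpha> H W) p
        + 1 / 2 * H p * vder e1 (Hcr e1 \<alpha> H W) p - \<alpha> p * H p * h"
    unfolding vHc cod hval N_def vB' Ap
    by (simp add: algebra_simps power2_eq_square power3_eq_cube)
  finally have P1: "\<bar>h\<bar> * frakf e1 V \<alpha> H W p = vder e1 H p * h + 3 / 2 * vder V (Hcr e1 \<alpha> H W) p
        + 1 / 2 * H p * vder e1 (Hcr e1 \<alpha> H W) p - \<alpha> p * H p * h" .
  show "\<bar>Hcr e1 \<alpha> H W p\<bar> * frakf e1 V \<alpha> H W p =
        vder e1 H p * Hcr e1 \<alpha> H W p + 3 / 2 * vder V (Hcr e1 \<alpha> H W) p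
        + 1 / 2 * H p * vder e1 (Hcr e1 \<alpha> H W) p - \<alpha> p * H p * Hcr e1 \<alpha> H W p
   \<and> E1 e1 V \<alpha> H W p =
        (1 / sqrt \<bar>Hcr e1 \<alpha> H W p\<bar>) *
        ( - 1 / 4 * sgn (Hcr e1 \<alpha> H W p) * frakf e1 V \<alpha> H W p * vder e1 (Hcr e1 \<alpha> H W) p
          + 1 / 2 * vder e1 (\<lambda>q. \<bar>Hcr e1 \<alpha> H W q\<bar> * frakf e1 V \<alpha> H W q) p
          + 3 / 2 * \<bar>Hcr e1 \<alpha> H W p\<bar> * frakf e1 V \<alpha> H W p * \<alpha> p
          + Hcr e1 \<alpha> H W p * (9 / 2 * vder V \<alpha> p + 3 * H p * Hcr e1 \<alpha> H W p - H p ^ 3 / 6))"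
  proof
    show "\<bar>Hcr e1 \<alpha> H W p\<bar> * frakf e1 V \<alpha> H W p =
        vder e1 H p * Hcr e1 \<alpha> H W p + 3 / 2 * vder V (Hcr e1 \<alpha> H W) p
        + 1 / 2 * H p * vder e1 (Hcr e1 \<alpha> H W) p - \<alpha> p * H p * Hcr e1 \<alpha> H W p"
      using P1 unfolding h_def .
  next
    show "E1 e1 V \<alpha> H W p = (1 / sqrt \<bar>Hcr e1 \<alpha> H W p\<bar>) *
        ( - 1 / 4 * sgn (Hcr e1 \<alpha> H W p) * frakf e1 V \<alpha> H W p * vder e1 (Hcr e1 \<alpha> H W) p
          + 1 / 2 * vder e1 (\<lambda>q. \<bar>Hcr e1 \<alpha> H W q\<bar> * frakf e1 V \<alpha> H W q) p
          + 3 / 2 * \<bar>Hcr e1 \<alpha> H W p\<bar> * frakf e1 V \<alpha> H W p * \<alpha> p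
          + Hcr e1 \<alpha> H W p * (9 / 2 * vder V \<alpha> p + 3 * H p * Hcr e1 \<alpha> H W p - H p ^ 3 / 6))"
    proof -
      define s where "s = sqrt \<bar>h\<bar>"
      have s0: "s > 0" using hne s_def by simp
      have s2: "\<bar>h\<bar> = s^2" using s_def by simp
      let ?dh = "\<lambda>v. ?DA v + \<alpha> p * ?Da v + H p * ?DH v / 3"
      have hp2: "Hcr e1 \<alpha> H W p ^ 2 > 0" using hne h_def by simp
      have hne': "Hcr e1 \<alpha> H W p \<noteq> 0" using hne h_def by simp
      have dG: "((\<lambda>q. N q / sqrt (sqrt (Hcr e1 \<alpha> H W q ^ 2))) has_derivative
          (\<lambda>v. ?DN v / s - N p * h * ?dh v / (2 * s^3 * \<bar>h\<bar>))) (at p)"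
        apply (rule has_derivative_eq_rhs)
         apply (rule derivative_intros dN dHc | simp add: hp2 hne hne')+
        using s0 hne by (simp add: fun_eq_iff real_sqrt_abs h_def[symmetric] s_def[symmetric] field_simps power3_eq_cube)
      have G: "vder e1 (\<lambda>q. sqrt \<bar>Hcr e1 \<alpha> H W q\<bar> * frakf e1 V \<alpha> H W q) p
          = ?DN (e1 p) / s - N p * h * ?dh (e1 p) / (2 * s^3 * \<bar>h\<bar>)"
      proof -
        have "vder e1 (\<lambda>q. sqrt \<bar>Hcr e1 \<alpha> H W q\<bar> * frakf e1 V \<alpha> H W q) p
           = vder e1 (\<lambda>q. N q / sqrt (sqrt (Hcr e1 \<alpha> H W q ^ 2))) p"
          by (rule vder_cong[OF U p]) (use assms(7) sqrt_helper in \<open>simp add: fr\<close>)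
        also have "\<dots> = ?DN (e1 p) / s - N p * h * ?dh (e1 p) / (2 * s^3 * \<bar>h\<bar>)"
          by (rule vder_has[OF dG])
        finally show ?thesis .
      qed
      have F: "vder e1 (\<lambda>q. \<bar>Hcr e1 \<alpha> H W q\<bar> * frakf e1 V \<alpha> H W q) p = ?DN (e1 p)"
      proof -
        have "vder e1 (\<lambda>q. \<bar>Hcr e1 \<alpha> H W q\<bar> * frakf e1 V \<alpha> H W q) p = vder e1 N p"
          by (rule vder_cong[OF U p]) (use assms(7) in \<open>simp add: fr\<close>)
        also have "\<dots> = ?DN (e1 p)" unfolding vder_def ..
        finally show ?thesis .
      qed
      have D: "vder e1 (Hcr e1 \<alpha> H W) p = ?dh (e1 p)" by (rule vder_has[OF dHc])
      show ?thesis
        unfolding E1_def G F D unfolding h_def[symmetric] s_def[symmetric] fr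
        by (rule alg2[OF s0 hne s2])
    qed
  qed
qed

end
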